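(* Let $n\ge 1$, let $C_u(v_1),\ldots,C_u(v_n)>0$, $C_d(v_1),\ldots,C_d(v_n)>0$ and $R_1,\ldots,R_n>0$ be sustainable, i.e. $R_i\le C_u(v_i)$ for all $i$, $\sum_{j\ne i}R_j\le C_d(v_i)$ for all $i$, and $(n-1)\sum_{i=1}^n R_i\le\sum_{i=1}^n C_u(v_i)$. Then the output $r_{i,j}$ of the algorithm described in the context satisfies the Downlink Capacity Constraint: for every $1\le k\le n$, $$\sum_{i\neq k}\sum_{j=1}^n r_{i,j} \leq C_d(v_k),$$ i.e. the aggregate rate of all sub-streams received by $v_k$ under the two-level broadcast trees described in the context is at most $C_d(v_k)$.
   Context: Sub-stream rate assigning algorithm. Input: $n$, uplink capacities $C_u(v_1),\ldots,C_u(v_n)$ and rates $R_1,\ldots,R_n$. Initialize $r_{i,j}:=0$ for all $1\le i,j\le n$ and $U_i := C_u(v_i)-R_i$ for $1\le i\le n$. Outer loop: for $i=1$ to $n$: set $R'_i := R_i$; inner loop: for $j=1$ to $n$: if $(n-2)R'_i > U_j$ then set $r_{i,j} := U_j/(n-2)$, else set $r_{i,j} := R'_i$; then set $U_j := U_j-(n-2)r_{i,j}$ and $R'_i := R'_i - r_{i,j}$; if $R'_i = 0$, exit the inner loop. Output all $r_{i,j}$. Interpretation: $r_{i,j}$ is the rate of sub-stream $s_{i,j}$ of site $v_i$'s data stream. Sub-stream $s_{i,i}$ is sent by $v_i$ directly to all other sites; for $j\ne i$, $s_{i,j}$ is sent from $v_i$ to $v_j$ and $v_j$ forwards it to the remaining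 $n-2$ sites. Thus every site other than $v_i$ receives each sub-stream $s_{i,j}$ exactly once, consuming $r_{i,j}$ of its downlink, and a site does not use its downlink for its own sub-streams. *)

theory Defs
  imports Main "HOL.Real"
begin

text \<open>Sites are indexed 1..n.
  The state consists of the residual uplink capacities U (indexed by j) and the
  rate matrix r (r i j = rate of sub-stream s_{i,j}).\<close>

text \<open>Inner loop for the fixed outer index i, processing j, j+1, ..., n.
  Rp is the current value of R'_i.  The exit test R'_i = 0 is performed after
  the body of each iteration, as in the algorithm.\<close>
function inner_loop ::
  "nat \<Rightarrow> nat \<Rightarrow> nat \<Rightarrow> real \<Rightarrow> (nat \<Rightarrow> real) \<Rightarrow> (nat \<Rightarrow> nat \<Rightarrow> real)
    \<Rightarrow> (nat \<Rightarrow> real) \<times> (nat \<Rightarrow> nat \<Rightarrow> real)" where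
  "inner_loop n i j Rp U r =
    (if n < j then (U, r)
     else
       (let rij = (if (real n - 2) * Rp > U j then U j / (real n - 2) else Rp);
            U' = U(j := U j - (real n - 2) * rij);
            Rp' = Rp - rij;
            r' = r(i := (r i)(j := rij))
        in if Rp' = 0 then (U', r') else inner_loop n i (Suc j) Rp' U' r'))"
  by pat_completeness auto
termination
  by (relation "measure (\<lambda>(n, i, j, _, _, _). Suc n - j)") auto

function outer_loop ::
  "nat \<Rightarrow> (nat \<Rightarrow> real) \<Rightarrow> nat \<Rightarrow> (nat \<Rightarrow> real) \<Rightarrow> (nat \<Rightarrow> nat \<Rightarrow> real)
    \<Rightarrow> nat \<Rightarrow> nat \<Rightarrow> real" where
  "outer_loop n R i U r =
    (if n < i then r
     else (case inner_loop n i 1 (R i) U r of (U', r') \<Rightarrow> outer_loop n R (Suc i) U' r'))"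
  by pat_completeness auto
termination
  by (relation "measure (\<lambda>(n, R, i, _, _). Suc n - i)") auto

definition sub_stream_rates :: "nat \<Rightarrow> (nat \<Rightarrow> real) \<Rightarrow> (nat \<Rightarrow> real) \<Rightarrow> nat \<Rightarrow> nat \<Rightarrow> real" where
  "sub_stream_rates n Cu R = outer_loop n R 1 (\<lambda>j. Cu j - R j) (\<lambda>i j. 0)"

end

theory Submission
  imports Defs
begin

lemma inner_other:
  "inner_loop n i j Rp U r = (U', r') \<Longrightarrow> i' \<noteq> i \<Longrightarrow> r' i' = r i'"
proof (induction n i j Rp U r arbitrary: U' r' rule: inner_loop.induct)
  case (1 n i j Rp U r)
  show ?case
  proof (cases "n < j")
    case True
    then show ?thesis using "1.prems" by (subst (asm) inner_loop.simps) auto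
  next
    case False
    define rij where "rij = (if (real n - 2) * Rp > U j then U j / (real n - 2) else Rp)"
    define U2 where "U2 = U(j := U j - (real n - 2) * rij)"
    define Rp2 where "Rp2 = Rp - rij"
    define r2 where "r2 = r(i := (r i)(j := rij))"
    have eq: "inner_loop n i j Rp U r = (if Rp2 = 0 then (U2, r2) else inner_loop n i (Suc j) Rp2 U2 r2)"
      using False by (subst inner_loop.simps) (simp add: Let_def rij_def U2_def Rp2_def r2_def)
    have r2i: "r2 i' = r i'" using "1.prems"(2) by (simp add: r2_def)
    show ?thesis
    proof (cases "Rp2 = 0")
      case True
      then show ?thesis using "1.prems"(1) eq r2i by auto
    next
      case F2: False
      have il: "inner_loop n i (Suc j) Rp2 U2 r2 = (U', r')" using eq F2 "1.prems"(1) by simp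
      have "r' i' = r2 i'"
        using "1.IH"[OF False rij_def U2_def Rp2_def r2_def F2 il "1.prems"(2)] .
      then show ?thesis using r2i by simp
    qed
  qed
qed

lemma inner_sum:
  assumes "inner_loop n i j Rp U r = (U', r')" "2 \<le> n" "Rp \<ge> 0" "\<forall>j'\<ge>j. r i j' = 0" "j \<ge> 1"
  shows "(\<Sum>j'=1..n. r' i j') \<le> (\<Sum>j'=1..n. r i j') + Rp"
  using assms
proof (induction n i j Rp U r arbitrary: U' r' rule: inner_loop.induct)
  case (1 n i j Rp U r)
  show ?case
  proof (cases "n < j")
    case True
    then show ?thesis using "1.prems" by (subst (asm) inner_loop.simps) auto
  next
    case False
    define rij where "rij = (if (real n - 2) * Rp > U j then U j / (real n - 2) else Rp)"
    define U2 where "U2 = U(j := U j - (real n - 2) * rij)"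
    define Rp2 where "Rp2 = Rp - rij"
    define r2 where "r2 = r(i := (r i)(j := rij))"
    have le: "rij \<le> Rp"
    proof (cases "(real n - 2) * Rp > U j")
      case True
      show ?thesis
      proof (cases "n = 2")
        case True then show ?thesis using "1.prems" by (simp add: rij_def)
      next
        case False
        then have "real n - 2 > 0" using "1.prems" by simp
        then show ?thesis using True by (simp add: rij_def pos_divide_le_eq mult.commute)
      qed
    qed (simp add: rij_def)
    have eq: "inner_loop n i j Rp U r = (if Rp2 = 0 then (U2, r2) else inner_loop n i (Suc j) Rp2 U2 r2)"
      using False by (subst inner_loop.simps) (simp add: Let_def rij_def U2_def Rp2_def r2_def)
    have s2: "(\<Sum>j'=1..n. r2 i j') = (\<Sum>j'=1..n. r i j') + rij"
    proof -
      have j1: "j \<ge> 1 \<or> j = 0" by auto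
      have "(\<Sum>j'=1..n. r2 i j') = (\<Sum>j'=1..n. r i j' + (if j' = j then rij else 0))"
        apply (rule sum.cong, simp)
        using "1.prems"(4) by (auto simp: r2_def)
      also have "\<dots> = (\<Sum>j'=1..n. r i j') + (\<Sum>j'=1..n. (if j' = j then rij else 0))"
        by (simp add: sum.distrib)
      also have "(\<Sum>j'=1..n. (if j' = j then rij else 0)) = (if j \<in> {1..n} then rij else 0)"
        by (simp add: sum.delta)
      finally show ?thesis using False "1.prems"(5) by simp
    qed
    show ?thesis
    proof (cases "Rp2 = 0")
      case True
      then show ?thesis using "1.prems"(1) eq s2 le by auto
    next
      case F2: False
      have il: "inner_loop n i (Suc j) Rp2 U2 r2 = (U', r')" using eq F2 "1.prems"(1) by simp
      moreover have z: "\<forall>j'\<ge>Suc j. r2 i j' = 0" using "1.prems"(4) by (auto simp: r2_def)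
      moreover have "Rp2 \<ge> 0" using le Rp2_def by simp
      ultimately have "(\<Sum>j'=1..n. r' i j') \<le> (\<Sum>j'=1..n. r2 i j') + Rp2"
        using "1.IH"[OF False rij_def U2_def Rp2_def r2_def F2 il "1.prems"(2)] "1.prems"(5) by simp
      then show ?thesis using s2 Rp2_def by simp
    qed
  qed
qed

lemma outer_keep:
  "i' < i \<Longrightarrow> outer_loop n R i U r i' = r i'"
proof (induction n R i U r rule: outer_loop.induct)
  case (1 n R i U r)
  show ?case
  proof (cases "n < i")
    case True then show ?thesis by (subst outer_loop.simps) simp
  next
    case False
    obtain U' r' where io: "inner_loop n i 1 (R i) U r = (U', r')" by fastforce
    have "outer_loop n R i U r i' = outer_loop n R (Suc i) U' r' i'"
      using False io by (subst outer_loop.simps) simp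
    also have "\<dots> = r' i'" using "1.IH"[OF False io[symmetric]] "1.prems" by simp
    also have "\<dots> = r i'" using inner_other[OF io] "1.prems" by simp
    finally show ?thesis .
  qed
qed

lemma outer_sum:
  assumes "2 \<le> n" "\<forall>i'\<in>{i..n}. R i' \<ge> 0" "\<forall>i'\<ge>i. \<forall>j. r i' j = 0" "i \<le> i'" "i' \<le> n"
  shows "(\<Sum>j=1..n. outer_loop n R i U r i' j) \<le> R i'"
  using assms
proof (induction n R i U r rule: outer_loop.induct)
  case (1 n R i U r)
  have F: "\<not> n < i" using "1.prems" by simp
  obtain U' r' where io: "inner_loop n i 1 (R i) U r = (U', r')" by fastforce
  have eq: "outer_loop n R i U r = outer_loop n R (Suc i) U' r'"
    using F io by (subst outer_loop.simps) simp
  show ?case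
  proof (cases "i' = i")
    case True
    have "outer_loop n R (Suc i) U' r' i' = r' i'" using True outer_keep by simp
    moreover have "(\<Sum>j'=1..n. r' i j') \<le> (\<Sum>j'=1..n. r i j') + R i"
      using inner_sum[OF io] "1.prems" by auto
    ultimately show ?thesis using eq True "1.prems" by simp
  next
    case False
    have "\<forall>i''\<ge>Suc i. \<forall>j. r' i'' j = 0" using inner_other[OF io] "1.prems"(3) by auto
    then show ?thesis using "1.IH"[OF F io[symmetric]] "1.prems" False eq by auto
  qed
qed

theorem propositionB6:
  fixes n :: nat and Cu Cd R :: "nat \<Rightarrow> real"
  assumes "n \<ge> 1"
    and "\<forall>i\<in>{1..n}. Cu i > 0"
    and "\<forall>i\<in>{1..n}. Cd i > 0"
    and "\<forall>i\<in>{1..n}. R i > 0"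
    and "\<forall>i\<in>{1..n}. R i \<le> Cu i"
    and "\<forall>i\<in>{1..n}. (\<Sum>j\<in>{1..n} - {i}. R j) \<le> Cd i"
    and "(real n - 1) * (\<Sum>i=1..n. R i) \<le> (\<Sum>i=1..n. Cu i)"
  shows "\<forall>k\<in>{1..n}. (\<Sum>i\<in>{1..n} - {k}. \<Sum>j=1..n. sub_stream_rates n Cu R i j) \<le> Cd k"
proof
  fix k assume k: "k \<in> {1..n}"
  show "(\<Sum>i\<in>{1..n} - {k}. \<Sum>j=1..n. sub_stream_rates n Cu R i j) \<le> Cd k"
  proof (cases "n = 1")
    case True
    then have "{1..n} - {k} = {}" using k by auto
    then have "(\<Sum>i\<in>{1..n} - {k}. \<Sum>j=1..n. sub_stream_rates n Cu R i j) = 0" by (simp only: sum.empty)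
    moreover have "Cd k > 0" using assms(3) k by blast
    ultimately show ?thesis by simp
  next
    case False
    then have n2: "2 \<le> n" using assms(1) by simp
    have "(\<Sum>i\<in>{1..n} - {k}. \<Sum>j=1..n. sub_stream_rates n Cu R i j) \<le> (\<Sum>i\<in>{1..n} - {k}. R i)"
      apply (rule sum_mono)
      unfolding sub_stream_rates_def
      apply (rule outer_sum[OF n2])
      using assms(4) by auto
    also have "\<dots> \<le> Cd k" using assms(6) k by blast
    finally show ?thesis .
  qed
qed

end
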